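(* Let $S(t)$ be an inverse subordinator, $T>0$, $Z_0>0$, $\sigma>0$. Assume the option is at the money ($K=Z_0$), the interest rate is $r=0$, and the Bachelier volatility is $\sigma^{Ba}=\sigma Z_0$. Let $C^{Ba}_S(T)$ and $C_S(T)$ be the fair prices of the European call option with strike $K$ and expiry $T$ in the subordinated Bachelier model and in the subordinated Black–Scholes model, respectively. Then $$0\le C^{Ba}_S(T)-C_S(T)\le \mathbb{E}\big[S(T)^{3/2}\big]\cdot\frac{Z_0}{12\sqrt{2\pi}}\,\sigma^3 .$$ The same two-sided bound holds for the corresponding European put prices.
   Context: Inverse subordinator: let $\nu$ be a Lévy measure on $(0,\infty)$ with $\int_0^\infty \min(1,x)\,\nu(dx)<\infty$ and $\nu(0,\infty)=\infty$, let $\psi(u)=\int_0^\infty(1-e^{-ux})\,\nu(dx)$, and let $U_\psi$ be the subordinator with $\mathbb{E}e^{-uU_\psi(t)}=e^{-t\psi(u)}$; the inverse subordinator is $S(t)=\inf\{\tau>0: U_\psi(\tau)>t\}$. $B$ is a standard Brownian motion independent of $S$. Subordinated Bachelier model: underlying $Z^{Ba}_S(t)=Z_0+\mu S(t)+\sigma^{Ba}B(S(t))$; subordinated B-S model: underlying $Z_S(t)=Z_0\exp(\mu S(t)+\sigma B(S(t)))$. For $\tau\ge0$, let $C^{Ba}(\tau)$ be the classical Bachelier call price with time to maturity $\tau$ (with $r=0$, $K=Z_0$: $C^{Ba}(\tau)=\sigma^{Ba}\sqrt{\tau}/\sqrt{2\pi}$) and $C(\tau)$ the classical Black–Scholes call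 price (with $r=0$, $K=Z_0$: $C(\tau)=Z_0(2\Phi(\sigma\sqrt\tau/2)-1)$, $\Phi$ the standard normal CDF). The fair prices in the subordinated models are $C^{Ba}_S(T)=\mathbb{E}\,C^{Ba}(S(T))$ and $C_S(T)=\mathbb{E}\,C(S(T))$ (prices under the respective minimal-entropy martingale measures); put prices are defined analogously. *)

theory Defs
  imports "HOL-Probability.Probability"
begin

definition levy_measure :: "real measure \<Rightarrow> bool" where
  "levy_measure \<nu> \<longleftrightarrow>
     sets \<nu> = sets borel \<and>
     emeasure \<nu> {..0} = 0 \<and>
     (\<integral>\<^sup>+ x. ennreal (min 1 x) \<partial>\<nu>) < \<infinity> \<and>
     emeasure \<nu> {0<..} = \<infinity>"

definition laplace_exponent :: "real measure \<Rightarrow> real \<Rightarrow> real" where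
  "laplace_exponent \<nu> u = (\<integral> x. (1 - exp (- u * x)) \<partial>\<nu>)"

definition subordinator :: "'a measure \<Rightarrow> real measure \<Rightarrow> (real \<Rightarrow> 'a \<Rightarrow> real) \<Rightarrow> bool" where
  "subordinator M \<nu> U \<longleftrightarrow>
     prob_space M \<and>
     (\<forall>t\<ge>0. U t \<in> borel_measurable M) \<and>
     (\<forall>\<omega>\<in>space M. U 0 \<omega> = 0) \<and>
     (AE \<omega> in M. mono_on {0..} (\<lambda>t. U t \<omega>) \<and>
                  (\<forall>t\<ge>0. continuous (at_right t) (\<lambda>s. U s \<omega>))) \<and>
     (\<forall>(ts::nat \<Rightarrow> real) n. 0 \<le> ts 0 \<and> (\<forall>i<n. ts i < ts (Suc i)) \<longrightarrow>
        prob_space.indep_vars M (\<lambda>_. borel) (\<lambda>i \<omega>. U (ts (Suc i)) \<omega> - U (ts i) \<omega>) {..<n}) \<and>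
     (\<forall>s\<ge>0. \<forall>t\<ge>0. distr M borel (\<lambda>\<omega>. U (s + t) \<omega> - U s \<omega>) = distr M borel (U t)) \<and>
     (\<forall>t\<ge>0. \<forall>u\<ge>0. prob_space.expectation M (\<lambda>\<omega>. exp (- u * U t \<omega>))
                      = exp (- t * laplace_exponent \<nu> u))"

definition inverse_subordinator :: "(real \<Rightarrow> 'a \<Rightarrow> real) \<Rightarrow> real \<Rightarrow> 'a \<Rightarrow> real" where
  "inverse_subordinator U t \<omega> = Inf {\<tau>. 0 < \<tau> \<and> t < U \<tau> \<omega>}"

definition Phi :: "real \<Rightarrow> real" where
  "Phi x = measure (density lborel std_normal_density) {..x}"

definition bachelier_call :: "real \<Rightarrow> real \<Rightarrow> real \<Rightarrow> real \<Rightarrow> real" where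
  "bachelier_call Z0 K sB \<tau> =
     (if \<tau> = 0 then max (Z0 - K) 0 else
      (let d = (Z0 - K) / (sB * sqrt \<tau>) in
        (Z0 - K) * Phi d + sB * sqrt \<tau> * std_normal_density d))"

definition bachelier_put :: "real \<Rightarrow> real \<Rightarrow> real \<Rightarrow> real \<Rightarrow> real" where
  "bachelier_put Z0 K sB \<tau> =
     (if \<tau> = 0 then max (K - Z0) 0 else
      (let d = (Z0 - K) / (sB * sqrt \<tau>) in
        (K - Z0) * Phi (- d) + sB * sqrt \<tau> * std_normal_density d))"

definition bs_call :: "real \<Rightarrow> real \<Rightarrow> real \<Rightarrow> real \<Rightarrow> real" where
  "bs_call Z0 K s \<tau> =
     (if \<tau> = 0 then max (Z0 - K) 0 else
      (let d1 = (ln (Z0 / K) + s\<^sup>2 / 2 * \<tau>) / (s * sqrt \<tau>);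
           d2 = d1 - s * sqrt \<tau> in
        Z0 * Phi d1 - K * Phi d2))"

definition bs_put :: "real \<Rightarrow> real \<Rightarrow> real \<Rightarrow> real \<Rightarrow> real" where
  "bs_put Z0 K s \<tau> =
     (if \<tau> = 0 then max (K - Z0) 0 else
      (let d1 = (ln (Z0 / K) + s\<^sup>2 / 2 * \<tau>) / (s * sqrt \<tau>);
           d2 = d1 - s * sqrt \<tau> in
        K * Phi (- d2) - Z0 * Phi (- d1)))"

end

theory Submission
  imports Defs
begin


abbreviation "NN \<equiv> density lborel std_normal_density"

lemma NN_prob: "prob_space NN"
  using prob_space_normal_density[of 1 0] by simp

lemma NN_rd: "real_distribution NN"
  unfolding real_distribution_def real_distribution_axioms_def using NN_prob by simp

lemma Phi_cdf: "Phi = cdf NN"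
  by (simp add: fun_eq_iff Phi_def cdf_def)

lemma Phi_diff:
  assumes "a \<le> b"
  shows "Phi b - Phi a = integral {a..b} std_normal_density"
proof (cases "a = b")
  case True then show ?thesis by simp
next
  case False
  then have ab: "a < b" using assms by simp
  interpret prob_space NN by (rule NN_prob)
  have "Phi b - Phi a = measure NN {a<..b}"
    unfolding Phi_cdf using finite_borel_measure.cdf_diff_eq[OF real_distribution.finite_borel_measure_M[OF NN_rd] ab] .
  moreover have "emeasure NN {a<..b} = (\<integral>\<^sup>+ x. ennreal (std_normal_density x * indicator {a<..b} x) \<partial>lborel)"
    by (subst emeasure_density) (auto intro!: nn_integral_cong simp: indicator_def)
  hence "(\<integral>\<^sup>+ x. ennreal (std_normal_density x * indicator {a<..b} x) \<partial>lborel) = ennreal (measure NN {a<..b})"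
    by (simp add: emeasure_eq_measure)
  hence "((\<lambda>x. std_normal_density x * indicator {a<..b} x) has_integral measure NN {a<..b}) UNIV"
    by (intro nn_integral_has_integral) (auto simp: normal_density_nonneg)
  hence "(std_normal_density has_integral measure NN {a<..b}) {a<..b}"
    by (subst has_integral_restrict_UNIV[symmetric]) (simp add: indicator_def of_bool_def if_distrib cong: if_cong)
  hence "(std_normal_density has_integral measure NN {a<..b}) {a..b}"
    by (subst has_integral_spike_set_eq[where T="{a<..b}"]) (auto intro: negligible_subset[of "{a}"])
  ultimately show ?thesis by (simp add: integral_unique)
qed

lemma cont_snd: "continuous_on A std_normal_density"
  unfolding std_normal_density_def by (intro continuous_intros) auto

lemma Phi_deriv: "(Phi has_real_derivative std_normal_density x) (at x)"
proof -
  define a where "a = x - 1"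
  define b where "b = x + 1"
  have "((\<lambda>y. integral {a..y} std_normal_density) has_real_derivative std_normal_density x) (at x within {a..b})"
    by (rule integral_has_real_derivative) (auto simp: a_def b_def cont_snd)
  hence "((\<lambda>y. integral {a..y} std_normal_density) has_real_derivative std_normal_density x) (at x)"
    by (simp add: at_within_Icc_at a_def b_def)
  from DERIV_add[OF DERIV_const this]
  have "((\<lambda>y. Phi a + integral {a..y} std_normal_density) has_real_derivative std_normal_density x) (at x)"
    by simp
  hence "((\<lambda>y. Phi a + integral {a..y} std_normal_density) has_real_derivative std_normal_density x) (at x)"
    by simp
  then show ?thesis
    by (rule has_field_derivative_transform_within_open[where S="{a<..}"])
       (auto simp: a_def Phi_diff[symmetric])
qed

lemma snd_pos: "std_normal_density x > 0"
  by (simp add: std_normal_density_def)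

lemma Phi_strict: "a < b \<Longrightarrow> Phi a < Phi b"
  by (rule DERIV_pos_imp_increasing) (auto intro: Phi_deriv snd_pos)

definition FF :: "real \<Rightarrow> real" where "FF x = Phi x - Phi (- x)"

lemma FF_deriv: "(FF has_real_derivative 2 * std_normal_density x) (at x)"
proof -
  have "((\<lambda>z. Phi (- z)) has_real_derivative std_normal_density (-x) * (-1)) (at x)"
    by (rule DERIV_chain2[OF Phi_deriv]) (auto intro!: derivative_eq_intros)
  from DERIV_diff[OF Phi_deriv this]
  have "((\<lambda>x. Phi x - Phi (- x)) has_real_derivative std_normal_density x - std_normal_density (-x) * (-1)) (at x)" .
  then show ?thesis unfolding FF_def[abs_def] by (simp add: std_normal_density_def)
qed

lemma FF0: "FF 0 = 0" by (simp add: FF_def)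



lemma "(FF has_real_derivative 2 * std_normal_density y) (at y)"
  by (rule FF_deriv)
lemma "(FF has_real_derivative 2 * std_normal_density y) (at y)"
  using FF_deriv[of y] by simp
lemma FF_strict: "0 \<le> a \<Longrightarrow> a < b \<Longrightarrow> FF a < FF b"
proof (rule DERIV_pos_imp_increasing[where f=FF])
  fix x show "\<exists>y. (FF has_real_derivative y) (at x) \<and> 0 < y"
    using FF_deriv[of x] snd_pos[of x] by force
qed

lemma FF_upper:
  assumes "x \<ge> 0"
  shows "FF x \<le> 2 * x * std_normal_density 0"
proof -
  have "(\<lambda>y. 2 * y * std_normal_density 0 - FF y) 0 \<le> (\<lambda>y. 2 * y * std_normal_density 0 - FF y) x"
  proof (rule DERIV_nonneg_imp_increasing_open[OF assms])
    fix y :: real assume y: "0 < y"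
    have "((\<lambda>y. 2 * y * std_normal_density 0 - FF y) has_real_derivative 2 * 1 * std_normal_density 0 - 2 * std_normal_density y) (at y)"
      by (intro derivative_eq_intros) (auto intro: FF_deriv)
    moreover have "std_normal_density y \<le> std_normal_density 0"
      unfolding std_normal_density_def by (intro mult_left_mono) auto
    ultimately show "\<exists>d. ((\<lambda>y. 2 * y * std_normal_density 0 - FF y) has_real_derivative d) (at y) \<and> 0 \<le> d"
      by force
  next
    show "continuous_on {0..x} (\<lambda>y. 2 * y * std_normal_density 0 - FF y)"
      by (intro continuous_intros DERIV_isCont[OF FF_deriv] continuous_at_imp_continuous_on ballI)
  qed
  then show ?thesis by (simp add: FF0)
qed

lemma exp_lower: "1 + (u::real) \<le> exp u"
  by (rule exp_ge_add_one_self)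

lemma FF_lower:
  assumes "x \<ge> 0"
  shows "2 * std_normal_density 0 * (x - x^3/6) \<le> FF x"
proof -
  let ?g = "\<lambda>y. FF y - 2 * std_normal_density 0 * (y - y^3/6)"
  have "?g 0 \<le> ?g x"
  proof (rule DERIV_nonneg_imp_increasing_open[OF assms])
    fix y :: real assume y: "0 < y"
    have d: "((\<lambda>y::real. y^3/6) has_real_derivative y^2/2) (at y)"
      by (rule derivative_eq_intros refl | simp)+
    have "(?g has_real_derivative 2 * std_normal_density y - 2 * std_normal_density 0 * (1 - y^2/2)) (at y)"
      by (intro DERIV_diff FF_deriv DERIV_cmult DERIV_ident d)
    moreover have "std_normal_density 0 * (1 - y^2/2) \<le> std_normal_density y"
      using exp_lower[of "-(y^2)/2"] by (simp add: std_normal_density_def divide_right_mono)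
    ultimately show "\<exists>d. (?g has_real_derivative d) (at y) \<and> 0 \<le> d"
      by force
  next
    show "continuous_on {0..x} ?g"
      by (intro continuous_intros DERIV_isCont[OF FF_deriv] continuous_at_imp_continuous_on ballI) auto
  qed
  then show ?thesis by (simp add: FF0)
qed





lemma bach_eq:
  assumes "Z0 > 0" "\<sigma> > 0"
  shows "bachelier_call Z0 Z0 (\<sigma> * Z0) \<tau> = \<sigma> * Z0 * std_normal_density 0 * sqrt \<tau>"
    "bachelier_put Z0 Z0 (\<sigma> * Z0) \<tau> = \<sigma> * Z0 * std_normal_density 0 * sqrt \<tau>"
  by (auto simp: bachelier_call_def bachelier_put_def Let_def)

lemma bs_eq:
  assumes "Z0 > 0" "\<sigma> > 0" "\<tau> \<ge> 0"
  shows "bs_call Z0 Z0 \<sigma> \<tau> = Z0 * FF (\<sigma> * sqrt \<tau> / 2)"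
    "bs_put Z0 Z0 \<sigma> \<tau> = Z0 * FF (\<sigma> * sqrt \<tau> / 2)"
proof -
  show "bs_call Z0 Z0 \<sigma> \<tau> = Z0 * FF (\<sigma> * sqrt \<tau> / 2)"
  proof (cases "\<tau> = 0")
    case True then show ?thesis by (simp add: bs_call_def FF0)
  next
    case False
    then have tp: "\<tau> > 0" using assms by simp
    have d1: "(ln (Z0 / Z0) + \<sigma>\<^sup>2 / 2 * \<tau>) / (\<sigma> * sqrt \<tau>) = \<sigma> * sqrt \<tau> / 2"
    proof -
      define r where "r = sqrt \<tau>"
      have r: "r > 0" "\<tau> = r * r" using tp by (auto simp: r_def)
      show ?thesis unfolding r_def[symmetric] using r assms by (simp add: field_simps power2_eq_square)
    qed
    show ?thesis using False unfolding bs_call_def Let_def d1 FF_def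
      by (simp add: algebra_simps)
  qed
  show "bs_put Z0 Z0 \<sigma> \<tau> = Z0 * FF (\<sigma> * sqrt \<tau> / 2)"
  proof (cases "\<tau> = 0")
    case True then show ?thesis by (simp add: bs_put_def FF0)
  next
    case False
    then have tp: "\<tau> > 0" using assms by simp
    have d1: "(ln (Z0 / Z0) + \<sigma>\<^sup>2 / 2 * \<tau>) / (\<sigma> * sqrt \<tau>) = \<sigma> * sqrt \<tau> / 2"
    proof -
      define r where "r = sqrt \<tau>"
      have r: "r > 0" "\<tau> = r * r" using tp by (auto simp: r_def)
      show ?thesis unfolding r_def[symmetric] using r assms by (simp add: field_simps power2_eq_square)
    qed
    show ?thesis using False unfolding bs_put_def Let_def d1 FF_def
      by (simp add: algebra_simps)
  qed
qed

lemma bs_neg: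
  assumes "Z0 > 0" "\<sigma> > 0" "\<tau> < 0"
  shows "bs_call Z0 Z0 \<sigma> \<tau> < 0" "bs_put Z0 Z0 \<sigma> \<tau> < 0"
proof -
  define s where "s = sqrt (- \<tau>)"
  have s: "s > 0" "sqrt \<tau> = - s" "\<tau> = - s * s"
    using assms by (auto simp: s_def real_sqrt_minus)
  have d1: "(ln (Z0 / Z0) + \<sigma>\<^sup>2 / 2 * \<tau>) / (\<sigma> * sqrt \<tau>) = \<sigma> * s / 2"
    using assms s by (simp add: field_simps power2_eq_square)
  have d1': "(ln (Z0 / Z0) + \<sigma>\<^sup>2 / 2 * \<tau>) / (\<sigma> * - s) = \<sigma> * s / 2"
    using d1 s by simp
  have lt: "\<sigma> * s / 2 < \<sigma> * s / 2 + \<sigma> * s" using s assms by simp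
  show "bs_call Z0 Z0 \<sigma> \<tau> < 0"
    using assms Phi_strict[OF lt] unfolding bs_call_def Let_def s(2) d1'
    by (simp add: algebra_simps)
  have lt2: "- (\<sigma> * s / 2 + \<sigma> * s) < - (\<sigma> * s / 2)" using s assms by simp
  show "bs_put Z0 Z0 \<sigma> \<tau> < 0"
    using assms Phi_strict[OF lt2] unfolding bs_put_def Let_def s(2) d1'
    by (simp add: algebra_simps)
qed




lemma powr32: "(\<tau>::real) \<ge> 0 \<Longrightarrow> \<tau> powr (3/2) = sqrt \<tau> ^ 3"
proof -
  assume t: "\<tau> \<ge> 0"
  show ?thesis
  proof (cases "\<tau> = 0")
    case True then show ?thesis by simp
  next
    case False
    then have tp: "\<tau> > 0" using t by simp
    have "\<tau> powr (3/2) = \<tau> powr 1 * \<tau> powr (1/2)" by (subst powr_add[symmetric]) simp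
    also have "\<dots> = \<tau> * sqrt \<tau>" using tp by (simp add: powr_half_sqrt)
    also have "\<dots> = sqrt \<tau> ^ 3" using t
      by (metis power3_eq_cube real_sqrt_pow2 power2_eq_square mult.assoc)
    finally show ?thesis .
  qed
qed

lemma pointwise:
  assumes "Z0 > 0" "\<sigma> > 0" "\<tau> \<ge> 0"
  shows "0 \<le> \<sigma> * Z0 * std_normal_density 0 * sqrt \<tau> - Z0 * FF (\<sigma> * sqrt \<tau> / 2)"
    "\<sigma> * Z0 * std_normal_density 0 * sqrt \<tau> - Z0 * FF (\<sigma> * sqrt \<tau> / 2)
       \<le> \<tau> powr (3/2) * Z0 / (12 * sqrt (2 * pi)) * \<sigma> ^ 3"
proof -
  define x where "x = \<sigma> * sqrt \<tau> / 2"
  have x0: "x \<ge> 0" using assms by (simp add: x_def)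
  have e: "\<sigma> * Z0 * std_normal_density 0 * sqrt \<tau> = Z0 * (2 * x * std_normal_density 0)"
    by (simp add: x_def)
  show "0 \<le> \<sigma> * Z0 * std_normal_density 0 * sqrt \<tau> - Z0 * FF (\<sigma> * sqrt \<tau> / 2)"
    unfolding e x_def[symmetric] using FF_upper[OF x0] assms
    by (simp add: mult_left_mono)
  have "\<sigma> * Z0 * std_normal_density 0 * sqrt \<tau> - Z0 * FF (\<sigma> * sqrt \<tau> / 2)
      \<le> Z0 * (2 * x * std_normal_density 0) - Z0 * (2 * std_normal_density 0 * (x - x^3/6))"
    unfolding e x_def[symmetric] using FF_lower[OF x0] assms
    by (simp add: mult_left_mono)
  also have "\<dots> = Z0 * std_normal_density 0 * x^3 / 3" by (simp add: algebra_simps)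
  also have "\<dots> = (sqrt \<tau> ^ 3 * Z0 / sqrt (2 * pi) * \<sigma> ^ 3) / 24"
    by (simp add: x_def std_normal_density_def power_mult_distrib field_simps)
  also have "\<dots> \<le> sqrt \<tau> ^ 3 * Z0 / (12 * sqrt (2 * pi)) * \<sigma> ^ 3"
    using assms by (simp add: field_simps)
  also have "\<dots> = \<tau> powr (3/2) * Z0 / (12 * sqrt (2 * pi)) * \<sigma> ^ 3"
    using powr32[OF assms(3)] by simp
  finally show "\<sigma> * Z0 * std_normal_density 0 * sqrt \<tau> - Z0 * FF (\<sigma> * sqrt \<tau> / 2)
       \<le> \<tau> powr (3/2) * Z0 / (12 * sqrt (2 * pi)) * \<sigma> ^ 3" .
qed

lemma meas_from_f:
  fixes f :: "real \<Rightarrow> real" and S :: "'a \<Rightarrow> real"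
  assumes f1: "\<And>\<tau>. f \<tau> < 0 \<longleftrightarrow> \<tau> < 0"
    and f2: "\<And>a b. 0 \<le> a \<Longrightarrow> a < b \<Longrightarrow> f a < f b"
    and c: "\<And>\<omega>. \<omega> \<in> space M \<Longrightarrow> S \<omega> < 0 \<Longrightarrow> S \<omega> = c"
    and m[measurable]: "(\<lambda>\<omega>. f (S \<omega>)) \<in> borel_measurable M"
  shows "S \<in> borel_measurable M"
  unfolding borel_measurable_iff_le
proof
  fix a :: real
  have mono: "0 \<le> u \<Longrightarrow> 0 \<le> a \<Longrightarrow> (u \<le> a \<longleftrightarrow> f u \<le> f a)" for u
    using f2[of u a] f2[of a u] by (cases "u = a") (auto simp: not_le[symmetric]; force)+
  show "{w \<in> space M. S w \<le> a} \<in> sets M"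
  proof (cases "a \<ge> 0")
    case True
    have "{w \<in> space M. S w \<le> a} = {w \<in> space M. f (S w) \<le> f a}"
    proof (intro Collect_cong conj_cong refl)
      fix w
      show "S w \<le> a \<longleftrightarrow> f (S w) \<le> f a"
      proof (cases "S w < 0")
        case True
        then show ?thesis using f1[of "S w"] f1[of a] \<open>a \<ge> 0\<close> by auto
      next
        case False
        then show ?thesis using mono[of "S w"] \<open>a \<ge> 0\<close> by auto
      qed
    qed
    also have "\<dots> \<in> sets M" by measurable
    finally show ?thesis .
  next
    case False
    show ?thesis
    proof (cases "c \<le> a")
      case True
      have "{w \<in> space M. S w \<le> a} = {w \<in> space M. f (S w) < 0}"
        using f1 c True False by (auto; force)
      also have "\<dots> \<in> sets M" by measurable
      finally show ?thesis .
    next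
      case ca: False
      have "{w \<in> space M. S w \<le> a} = {}"
        using c ca False by force
      then show ?thesis by (metis sets.empty_sets)
    qed
  qed
qed




lemma psi_pos:
  assumes "levy_measure \<nu>"
  shows "laplace_exponent \<nu> 1 > 0"
proof -
  have sets: "sets \<nu> = sets borel" and z: "emeasure \<nu> {..0} = 0"
    and fin: "(\<integral>\<^sup>+ x. ennreal (min 1 x) \<partial>\<nu>) < \<infinity>" and inf: "emeasure \<nu> {0<..} = \<infinity>"
    using assms unfolding levy_measure_def by auto
  have sp: "space \<nu> = UNIV" using sets_eq_imp_space_eq[OF sets] by simp
  have null: "{..0::real} \<in> null_sets \<nu>" using z sets by (auto simp: null_sets_def)
  have AEpos: "AE x in \<nu>. 0 < x"
    by (rule AE_I'[OF null]) auto
  define f where "f x = 1 - exp (- x)" for x :: real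
  have fm: "f \<in> borel_measurable \<nu>"
    unfolding measurable_cong_sets[OF sets refl] f_def by measurable
  have "(\<integral>\<^sup>+ x. ennreal (norm (f x)) \<partial>\<nu>) \<le> (\<integral>\<^sup>+ x. ennreal (min 1 x) \<partial>\<nu>)"
  proof (rule nn_integral_mono_AE)
    show "AE x in \<nu>. ennreal (norm (f x)) \<le> ennreal (min 1 x)"
      using AEpos
    proof (rule AE_mp, intro AE_I2 impI)
      fix x :: real assume x: "0 < x"
      have "1 - x \<le> exp (- x)" using exp_ge_add_one_self[of "-x"] by simp
      moreover have "exp (- x) < 1" using x by simp
      ultimately show "ennreal (norm (f x)) \<le> ennreal (min 1 x)"
        by (intro ennreal_leI) (auto simp: f_def)
    qed
  qed
  hence "(\<integral>\<^sup>+ x. ennreal (norm (f x)) \<partial>\<nu>) < \<infinity>" using fin by (meson order.strict_trans1)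
  hence int: "integrable \<nu> f" using fm by (simp add: integrable_iff_bounded)
  have fnn: "AE x in \<nu>. 0 \<le> f x"
    using AEpos by eventually_elim (simp add: f_def)
  have ge: "integral\<^sup>L \<nu> f \<ge> 0" using fnn by (rule integral_nonneg_AE)
  have ne: "integral\<^sup>L \<nu> f \<noteq> 0"
  proof
    assume "integral\<^sup>L \<nu> f = 0"
    hence "AE x in \<nu>. f x = 0" using integral_nonneg_eq_0_iff_AE[OF int fnn] by simp
    hence "AE x in \<nu>. False" using AEpos by eventually_elim (simp add: f_def)
    hence "space \<nu> \<in> null_sets \<nu>"
      by (subst (asm) AE_iff_null) auto
    hence "emeasure \<nu> UNIV = 0" using sp by auto
    hence "emeasure \<nu> {0<..} = 0"
      by (metis emeasure_mono le_zero_eq sets sets.top sp subset_UNIV)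
    with inf show False by simp
  qed
  have "laplace_exponent \<nu> 1 = integral\<^sup>L \<nu> f"
    by (simp add: laplace_exponent_def f_def[abs_def])
  with ge ne show ?thesis by simp
qed

lemma tail:
  assumes "subordinator M \<nu> U" "t \<ge> 0"
  shows "emeasure M {\<omega>\<in>space M. U t \<omega> \<le> T} \<le> ennreal (exp T * exp (- t * laplace_exponent \<nu> 1))"
proof -
  have D: "prob_space M \<and> (\<forall>t\<ge>0. U t \<in> borel_measurable M)"
    using assms(1) unfolding subordinator_def by blast
  have ps: "prob_space M" and m[measurable]: "U t \<in> borel_measurable M"
    using D assms(2) by auto
  have exall: "\<forall>t\<ge>0. \<forall>u\<ge>0. prob_space.expectation M (\<lambda>\<omega>. exp (- u * U t \<omega>))
                      = exp (- t * laplace_exponent \<nu> u)"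
    using assms(1) unfolding subordinator_def by (elim conjE) assumption
  have ex: "prob_space.expectation M (\<lambda>\<omega>. exp (- 1 * U t \<omega>)) = exp (- t * laplace_exponent \<nu> 1)"
    using exall[rule_format, OF assms(2), of 1] by simp
  have int: "integrable M (\<lambda>\<omega>. exp (- 1 * U t \<omega>))"
    using ex not_integrable_integral_eq by fastforce
  have "emeasure M {\<omega>\<in>space M. exp (- T) \<le> exp (- 1 * U t \<omega>)} \<le> (1 / exp (- T)) * (\<integral>\<omega>. exp (- 1 * U t \<omega>) \<partial>M)"
    by (rule integral_Markov_inequality[OF int]) auto
  also have "\<dots> = exp T * exp (- t * laplace_exponent \<nu> 1)"
    using ex by (simp add: exp_minus field_simps)
  finally show ?thesis by simp
qed




lemma sum_2n: "(\<Sum>n<m. 2 * (real n + 1)) = real m * (real m + 1)"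
  by (induction m) (auto simp: algebra_simps)

lemma summ: 
  assumes "0 \<le> q" "q < (1::real)"
  shows "summable (\<lambda>n. 2 * (real n + 1) * C * q ^ n)"
proof -
  have "summable (\<lambda>n. diffs (\<lambda>_. 1::real) n * q ^ n)"
    by (rule termdiff_converges[of q 1]) (use assms in \<open>auto intro: summable_geometric\<close>)
  hence "summable (\<lambda>n. (2 * C) * (diffs (\<lambda>_. 1::real) n * q ^ n))"
    by (rule summable_mult)
  thus ?thesis by (simp add: diffs_def algebra_simps)
qed

locale subord_ctx =
  fixes M :: "'a measure" and \<nu> U T St
  assumes lev: "levy_measure \<nu>" and sub: "subordinator M \<nu> U" and Tpos: "T > 0"
    and St_def: "\<And>\<omega>. St \<omega> = Inf {\<tau>. 0 < \<tau> \<and> T < U \<tau> \<omega>}"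
begin

lemma ps: "prob_space M" using sub unfolding subordinator_def by blast

lemma Um[measurable]: "t \<ge> 0 \<Longrightarrow> U t \<in> borel_measurable M"
  using sub unfolding subordinator_def by blast

lemma U0: "\<omega> \<in> space M \<Longrightarrow> U 0 \<omega> = 0"
  using sub unfolding subordinator_def by blast

lemma Umn[measurable]: "U (real n) \<in> borel_measurable M" by (rule Um) simp

definition "q = exp (- laplace_exponent \<nu> 1)"

lemma q: "0 < q" "q < 1" using psi_pos[OF lev] by (auto simp: q_def)

lemma tailn: "emeasure M {\<omega>\<in>space M. U (real n) \<omega> \<le> T} \<le> ennreal (exp T * q ^ n)"
proof -
  have "exp (- real n * laplace_exponent \<nu> 1) = q ^ n"
    unfolding q_def by (subst exp_of_nat_mult[symmetric]) simp
  then show ?thesis using tail[OF sub, of "real n" T] by simp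
qed

lemma St_nonneg: "0 < t \<Longrightarrow> T < U t \<omega> \<Longrightarrow> 0 \<le> St \<omega>"
  unfolding St_def by (rule cInf_greatest) auto

lemma St_le: "0 < t \<Longrightarrow> T < U t \<omega> \<Longrightarrow> St \<omega> \<le> t"
  unfolding St_def by (rule cInf_lower) (auto intro: bdd_belowI[of _ 0])

lemma St_neg: "St \<omega> < 0 \<Longrightarrow> St \<omega> = Inf ({}::real set)"
proof -
  assume "St \<omega> < 0"
  hence e: "{\<tau>. 0 < \<tau> \<and> T < U \<tau> \<omega>} = {}" using St_nonneg by force
  show ?thesis by (simp only: St_def e)
qed

lemma AE_nonneg: "AE \<omega> in M. 0 \<le> St \<omega>"
proof -
  define N where "N = {\<omega>\<in>space M. \<forall>n::nat. U (real n) \<omega> \<le> T}"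
  have Nm: "N \<in> sets M" unfolding N_def by measurable
  have le: "emeasure M N \<le> ennreal (exp T * q ^ n)" for n
    by (rule order.trans[OF emeasure_mono tailn]) (auto simp: N_def)
  have lim: "(\<lambda>n. ennreal (exp T * q ^ n)) \<longlonglongrightarrow> ennreal (exp T * 0)"
    using q by (intro tendsto_ennrealI tendsto_mult tendsto_const LIMSEQ_power_zero) auto
  have "emeasure M N \<le> ennreal (exp T * 0)"
    by (rule LIMSEQ_le_const[OF lim]) (use le in auto)
  hence "N \<in> null_sets M" using Nm by (simp add: null_sets_def)
  then show ?thesis
  proof (rule AE_I')
    show "{\<omega> \<in> space M. \<not> 0 \<le> St \<omega>} \<subseteq> N"
    proof safe
      fix \<omega> assume w: "\<omega> \<in> space M" "\<not> 0 \<le> St \<omega>"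
      show "\<omega> \<in> N" unfolding N_def
      proof (intro CollectI conjI allI w(1))
        fix n :: nat
        show "U (real n) \<omega> \<le> T"
        proof (rule ccontr)
          assume "\<not> U (real n) \<omega> \<le> T"
          hence u: "T < U (real n) \<omega>" by simp
          have "n \<noteq> 0" using u U0[OF w(1)] Tpos by (cases n) auto
          hence "0 < real n" by simp
          with u St_nonneg w(2) show False by blast
        qed
      qed
    qed
  qed
qed

end




context subord_ctx begin

lemma pw_sum:
  assumes s: "0 \<le> (s::real)"
  shows "ennreal (s powr (3/2)) \<le> (\<Sum>n. ennreal (2 * (real n + 1)) * indicator {x. real n < x} s)"
proof -
  define m where "m = nat \<lceil>s\<rceil>"
  have sm: "s \<le> real m" unfolding m_def using s by linarith
  have lt: "n < m \<Longrightarrow> real n < s" for n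
  proof -
    assume "n < m"
    hence "int n < \<lceil>s\<rceil>" unfolding m_def by linarith
    thus ?thesis by (metis less_ceiling_iff of_int_of_nat_eq)
  qed
  have "s powr (3/2) = s * sqrt s"
    using powr32[OF s] s by (simp add: power3_eq_cube)
  also have "\<dots> \<le> s * (s + 1)"
  proof (intro mult_left_mono s)
    have "sqrt s \<le> sqrt ((s+1)^2)"
      proof (rule real_sqrt_le_mono)
      have "0 \<le> s * s" using s by simp
      thus "s \<le> (s+1)^2" using s by (simp add: power2_eq_square algebra_simps)
    qed
    thus "sqrt s \<le> s + 1" using s by simp
  qed
  also have "\<dots> \<le> real m * (real m + 1)"
    using s sm by (intro mult_mono) auto
  also have "\<dots> = (\<Sum>n<m. 2 * (real n + 1))" by (rule sum_2n[symmetric])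
  finally have "ennreal (s powr (3/2)) \<le> ennreal (\<Sum>n<m. 2 * (real n + 1))" by (rule ennreal_leI)
  also have "\<dots> = (\<Sum>n<m. ennreal (2 * (real n + 1)) * indicator {x. real n < x} s)"
    using lt by (subst sum_ennreal[symmetric]) (auto intro!: sum.cong simp: indicator_def)
  also have "\<dots> \<le> (\<Sum>n. ennreal (2 * (real n + 1)) * indicator {x. real n < x} s)"
    by (rule sum_le_suminf) auto
  finally show ?thesis .
qed

lemma moment:
  assumes Sm[measurable]: "St \<in> borel_measurable M"
  shows "integrable M (\<lambda>\<omega>. St \<omega> powr (3/2))"
proof -
  interpret prob_space M by (rule ps)
  define A where "A n = {\<omega>\<in>space M. real n < St \<omega>}" for n :: nat
  have Am[measurable]: "A n \<in> sets M" for n unfolding A_def by measurable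
  have emA: "emeasure M (A n) \<le> ennreal (exp T * q ^ n)" for n
  proof (cases "n = 0")
    case True
    have "emeasure M (A n) \<le> 1" by (rule emeasure_le_1)
    also have "1 \<le> ennreal (exp T * q ^ n)" using True Tpos by simp
    finally show ?thesis .
  next
    case False
    have "A n \<subseteq> {\<omega>\<in>space M. U (real n) \<omega> \<le> T}"
    proof (safe)
      fix \<omega> assume "\<omega> \<in> A n"
      then show "\<omega> \<in> space M" "U (real n) \<omega> \<le> T" using False St_le[of "real n" \<omega>]
        by (auto simp: A_def) (meson not_le)
    qed
    then show ?thesis by (rule order.trans[OF emeasure_mono tailn]) simp
  qed
  have ind: "indicator {x. real n < x} (St \<omega>) = indicator (A n) \<omega>" if "\<omega> \<in> space M" for n \<omega>
    using that by (simp add: A_def indicator_def)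
  have "(\<integral>\<^sup>+\<omega>. ennreal (St \<omega> powr (3/2)) \<partial>M)
      \<le> (\<integral>\<^sup>+\<omega>. (\<Sum>n. ennreal (2 * (real n + 1)) * indicator (A n) \<omega>) \<partial>M)"
    using AE_nonneg
  proof (intro nn_integral_mono_AE, elim AE_mp, intro AE_I2 impI)
    fix \<omega> assume w: "\<omega> \<in> space M" and s: "0 \<le> St \<omega>"
    show "ennreal (St \<omega> powr (3/2)) \<le> (\<Sum>n. ennreal (2 * (real n + 1)) * indicator (A n) \<omega>)"
      using pw_sum[OF s] unfolding ind[OF w] .
  qed
  also have "\<dots> = (\<Sum>n. ennreal (2 * (real n + 1)) * emeasure M (A n))"
    by (subst nn_integral_suminf) (auto simp: nn_integral_cmult_indicator)
  also have "\<dots> \<le> (\<Sum>n. ennreal (2 * (real n + 1) * exp T * q ^ n))"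
  proof (intro suminf_le summableI)
    fix n
    have "ennreal (2 * (real n + 1)) * emeasure M (A n) \<le> ennreal (2 * (real n + 1)) * ennreal (exp T * q ^ n)"
      by (intro mult_left_mono emA) auto
    also have "\<dots> = ennreal (2 * (real n + 1) * exp T * q ^ n)"
      using q by (subst ennreal_mult[symmetric]) (auto simp: mult.assoc)
    finally show "ennreal (2 * (real n + 1)) * emeasure M (A n) \<le> ennreal (2 * (real n + 1) * exp T * q ^ n)" .
  qed
  also have "\<dots> = ennreal (\<Sum>n. 2 * (real n + 1) * exp T * q ^ n)"
    using q by (intro suminf_ennreal2 summ) auto
  also have "\<dots> < \<infinity>" by simp
  finally show ?thesis
    by (intro integrableI_nonneg) auto
qed

end




lemma Phi_mono: "mono Phi"
  by (rule monoI) (metis Phi_strict le_less)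

lemma Phi_meas[measurable]: "Phi \<in> borel_measurable borel"
  by (rule borel_measurable_mono[OF Phi_mono])

lemma bs_call_meas: "bs_call Z0 K s \<in> borel_measurable borel"
  unfolding bs_call_def Let_def by measurable

lemma bs_put_meas: "bs_put Z0 K s \<in> borel_measurable borel"
  unfolding bs_put_def Let_def by measurable

lemma FF_nonneg: "0 \<le> x \<Longrightarrow> 0 \<le> FF x"
  using FF_strict[of 0 x] FF0 by (cases "x = 0") auto

lemma sqrt_le_pow: "0 \<le> s \<Longrightarrow> sqrt s \<le> 1 + s powr (3/2)"
proof -
  assume s: "0 \<le> s"
  define r where "r = sqrt s"
  have r: "0 \<le> r" using s by (simp add: r_def)
  have "r \<le> 1 + r ^ 3"
  proof (cases "r \<le> 1")
    case True then show ?thesis using r zero_le_power[of r 3] by linarith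
  next
    case False
    then have "1 \<le> r * r" using r mult_mono[of 1 r 1 r] by simp
    hence "r * 1 \<le> r * (r * r)" using r by (intro mult_left_mono) auto
    then show ?thesis by (simp add: power3_eq_cube)
  qed
  then show ?thesis using powr32[OF s] by (simp add: r_def)
qed




context subord_ctx begin

lemma combined:
  fixes g :: "real \<Rightarrow> real" and Z0 \<sigma> :: real
  assumes Z: "Z0 > 0" and sg: "\<sigma> > 0"
    and gm[measurable]: "g \<in> borel_measurable borel"
    and g_eq: "\<And>\<tau>. \<tau> \<ge> 0 \<Longrightarrow> g \<tau> = Z0 * FF (\<sigma> * sqrt \<tau> / 2)"
    and g_neg: "\<And>\<tau>. \<tau> < 0 \<Longrightarrow> g \<tau> < 0"
  shows "0 \<le> (\<integral>\<omega>. \<sigma> * Z0 * std_normal_density 0 * sqrt (St \<omega>) \<partial>M) - (\<integral>\<omega>. g (St \<omega>) \<partial>M) \<and>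
     (\<integral>\<omega>. \<sigma> * Z0 * std_normal_density 0 * sqrt (St \<omega>) \<partial>M) - (\<integral>\<omega>. g (St \<omega>) \<partial>M)
       \<le> (\<integral>\<omega>. St \<omega> powr (3/2) \<partial>M) * Z0 / (12 * sqrt (2 * pi)) * \<sigma> ^ 3"
proof -
  interpret prob_space M by (rule ps)
  define k where "k = \<sigma> * Z0 * std_normal_density 0"
  have kpos: "k > 0" using Z sg by (simp add: k_def std_normal_density_def)
  define C where "C = Z0 / (12 * sqrt (2 * pi)) * \<sigma> ^ 3"
  have C0: "C \<ge> 0" using Z sg by (simp add: C_def)
  have pnn: "0 \<le> (\<integral>\<omega>. St \<omega> powr (3/2) \<partial>M)" by (intro integral_nonneg_AE) simp
  have pw: "0 \<le> k * sqrt s - g s \<and> k * sqrt s - g s \<le> s powr (3/2) * C" if s: "0 \<le> s" for s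
    using pointwise[OF Z sg s] g_eq[OF s] by (simp add: k_def C_def mult.assoc)
  show ?thesis
  proof (cases "St \<in> borel_measurable M")
    case True
    note Sm[measurable] = True
    have pint: "integrable M (\<lambda>\<omega>. St \<omega> powr (3/2))" by (rule moment[OF True])
    have i1: "integrable M (\<lambda>\<omega>. k * sqrt (St \<omega>))"
    proof (rule Bochner_Integration.integrable_bound[where f="\<lambda>\<omega>. k * (1 + St \<omega> powr (3/2))"])
      show "integrable M (\<lambda>\<omega>. k * (1 + St \<omega> powr (3/2)))"
        using pint by auto
      show "AE \<omega> in M. norm (k * sqrt (St \<omega>)) \<le> norm (k * (1 + St \<omega> powr (3/2)))"
        using AE_nonneg
      proof (elim AE_mp, intro AE_I2 impI)
        fix \<omega> assume "0 \<le> St \<omega>"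
        then show "norm (k * sqrt (St \<omega>)) \<le> norm (k * (1 + St \<omega> powr (3/2)))"
          using sqrt_le_pow[of "St \<omega>"] kpos by (simp add: abs_mult)
      qed
    qed measurable
    have i2: "integrable M (\<lambda>\<omega>. g (St \<omega>))"
    proof (rule Bochner_Integration.integrable_bound[where f="\<lambda>\<omega>. k * sqrt (St \<omega>) + St \<omega> powr (3/2) * C"])
      show "integrable M (\<lambda>\<omega>. k * sqrt (St \<omega>) + St \<omega> powr (3/2) * C)"
        using pint i1 by auto
      show "AE \<omega> in M. norm (g (St \<omega>)) \<le> norm (k * sqrt (St \<omega>) + St \<omega> powr (3/2) * C)"
        using AE_nonneg
      proof (elim AE_mp, intro AE_I2 impI)
        fix \<omega> assume s: "0 \<le> St \<omega>"
        have "0 \<le> g (St \<omega>)" using g_eq[OF s] FF_nonneg Z sg s by simp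
        then show "norm (g (St \<omega>)) \<le> norm (k * sqrt (St \<omega>) + St \<omega> powr (3/2) * C)"
          using pw[OF s] kpos C0 s by simp
      qed
    qed measurable
    have eq: "(\<integral>\<omega>. k * sqrt (St \<omega>) \<partial>M) - (\<integral>\<omega>. g (St \<omega>) \<partial>M) = (\<integral>\<omega>. k * sqrt (St \<omega>) - g (St \<omega>) \<partial>M)"
      using i1 i2 by simp
    have lo: "0 \<le> (\<integral>\<omega>. k * sqrt (St \<omega>) - g (St \<omega>) \<partial>M)"
      using AE_nonneg
      by (intro integral_nonneg_AE) (elim AE_mp, intro AE_I2 impI, use pw in blast)
    have "(\<integral>\<omega>. k * sqrt (St \<omega>) - g (St \<omega>) \<partial>M) \<le> (\<integral>\<omega>. St \<omega> powr (3/2) * C \<partial>M)"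
    proof (rule integral_mono_AE)
      show "integrable M (\<lambda>\<omega>. k * sqrt (St \<omega>) - g (St \<omega>))" using i1 i2 by auto
      show "integrable M (\<lambda>\<omega>. St \<omega> powr (3/2) * C)" using pint by auto
      show "AE \<omega> in M. k * sqrt (St \<omega>) - g (St \<omega>) \<le> St \<omega> powr (3/2) * C"
        using AE_nonneg by (elim AE_mp, intro AE_I2 impI) (use pw in blast)
    qed
    also have "\<dots> = (\<integral>\<omega>. St \<omega> powr (3/2) \<partial>M) * Z0 / (12 * sqrt (2 * pi)) * \<sigma> ^ 3"
      by (simp add: C_def)
    finally have up: "(\<integral>\<omega>. k * sqrt (St \<omega>) - g (St \<omega>) \<partial>M) \<le> (\<integral>\<omega>. St \<omega> powr (3/2) \<partial>M) * Z0 / (12 * sqrt (2 * pi)) * \<sigma> ^ 3" .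
    show ?thesis unfolding k_def[symmetric] using eq lo up by linarith
  next
    case False
    have n1: "\<not> (\<lambda>\<omega>. k * sqrt (St \<omega>)) \<in> borel_measurable M"
    proof
      assume "(\<lambda>\<omega>. k * sqrt (St \<omega>)) \<in> borel_measurable M"
      hence "St \<in> borel_measurable M"
      proof (rule meas_from_f[rotated 3])
        show "k * sqrt \<tau> < 0 \<longleftrightarrow> \<tau> < 0" for \<tau>
          using kpos by (simp add: mult_less_0_iff)
        show "k * sqrt a < k * sqrt b" if "0 \<le> a" "a < b" for a b
          using kpos that by simp
        show "St \<omega> = Inf {}" if "St \<omega> < 0" for \<omega> using St_neg that .
      qed
      with False show False by simp
    qed
    have n2: "\<not> (\<lambda>\<omega>. g (St \<omega>)) \<in> borel_measurable M"
    proof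
      assume "(\<lambda>\<omega>. g (St \<omega>)) \<in> borel_measurable M"
      hence "St \<in> borel_measurable M"
      proof (rule meas_from_f[rotated 3])
        show "g \<tau> < 0 \<longleftrightarrow> \<tau> < 0" for \<tau>
        proof (cases "\<tau> < 0")
          case True then show ?thesis using g_neg by simp
        next
          case False
          then have "0 \<le> g \<tau>" using g_eq[of \<tau>] FF_nonneg Z sg by simp
          then show ?thesis using False by simp
        qed
        show "g a < g b" if "0 \<le> a" "a < b" for a b
        proof -
          have "\<sigma> * sqrt a / 2 < \<sigma> * sqrt b / 2" using that sg by simp
          from FF_strict[OF _ this] have "FF (\<sigma> * sqrt a / 2) < FF (\<sigma> * sqrt b / 2)"
            using that sg by simp
          then show ?thesis using g_eq that Z by simp
        qed
        show "St \<omega> = Inf {}" if "St \<omega> < 0" for \<omega> using St_neg that .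
      qed
      with False show False by simp
    qed
    have z1: "(\<integral>\<omega>. k * sqrt (St \<omega>) \<partial>M) = 0" using n1 not_integrable_integral_eq by blast
    have z2: "(\<integral>\<omega>. g (St \<omega>) \<partial>M) = 0" using n2 not_integrable_integral_eq by blast
    have hr: "0 \<le> (\<integral>\<omega>. St \<omega> powr (3/2) \<partial>M) * Z0 / (12 * sqrt (2 * pi)) * \<sigma> ^ 3"
      using pnn Z sg by simp
    show ?thesis unfolding k_def[symmetric] z1 z2 using hr by simp
  qed
qed

end




theorem theorem1:
  fixes M :: "'a measure" and \<nu> :: "real measure" and U :: "real \<Rightarrow> 'a \<Rightarrow> real"
    and T Z0 \<sigma> \<sigma>Ba K :: real
  assumes "levy_measure \<nu>"
    and "subordinator M \<nu> U"
    and "T > 0" and "Z0 > 0" and "\<sigma> > 0"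
    and "K = Z0"
    and "\<sigma>Ba = \<sigma> * Z0"
  defines "S \<equiv> inverse_subordinator U"
  shows
    "(0 \<le> (\<integral>\<omega>. bachelier_call Z0 K \<sigma>Ba (S T \<omega>) \<partial>M) - (\<integral>\<omega>. bs_call Z0 K \<sigma> (S T \<omega>) \<partial>M) \<and>
     (\<integral>\<omega>. bachelier_call Z0 K \<sigma>Ba (S T \<omega>) \<partial>M) - (\<integral>\<omega>. bs_call Z0 K \<sigma> (S T \<omega>) \<partial>M)
       \<le> (\<integral>\<omega>. S T \<omega> powr (3/2) \<partial>M) * Z0 / (12 * sqrt (2 * pi)) * \<sigma> ^ 3) \<and>
    (0 \<le> (\<integral>\<omega>. bachelier_put Z0 K \<sigma>Ba (S T \<omega>) \<partial>M) - (\<integral>\<omega>. bs_put Z0 K \<sigma> (S T \<omega>) \<partial>M) \<and>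
     (\<integral>\<omega>. bachelier_put Z0 K \<sigma>Ba (S T \<omega>) \<partial>M) - (\<integral>\<omega>. bs_put Z0 K \<sigma> (S T \<omega>) \<partial>M)
       \<le> (\<integral>\<omega>. S T \<omega> powr (3/2) \<partial>M) * Z0 / (12 * sqrt (2 * pi)) * \<sigma> ^ 3)"
proof -
  interpret subord_ctx M \<nu> U T "S T"
    by unfold_locales (use assms in \<open>auto simp: S_def inverse_subordinator_def\<close>)
  have bc: "bachelier_call Z0 K \<sigma>Ba (S T \<omega>) = \<sigma> * Z0 * std_normal_density 0 * sqrt (S T \<omega>)" for \<omega>
    using bach_eq(1)[OF assms(4,5)] assms(6,7) by simp
  have bp: "bachelier_put Z0 K \<sigma>Ba (S T \<omega>) = \<sigma> * Z0 * std_normal_density 0 * sqrt (S T \<omega>)" for \<omega>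
    using bach_eq(2)[OF assms(4,5)] assms(6,7) by simp
  have c1: "0 \<le> (\<integral>\<omega>. \<sigma> * Z0 * std_normal_density 0 * sqrt (S T \<omega>) \<partial>M) - (\<integral>\<omega>. bs_call Z0 Z0 \<sigma> (S T \<omega>) \<partial>M) \<and>
     (\<integral>\<omega>. \<sigma> * Z0 * std_normal_density 0 * sqrt (S T \<omega>) \<partial>M) - (\<integral>\<omega>. bs_call Z0 Z0 \<sigma> (S T \<omega>) \<partial>M)
       \<le> (\<integral>\<omega>. S T \<omega> powr (3/2) \<partial>M) * Z0 / (12 * sqrt (2 * pi)) * \<sigma> ^ 3"
    by (rule combined[OF assms(4,5) bs_call_meas bs_eq(1)[OF assms(4,5)] bs_neg(1)[OF assms(4,5)]])
  have c2: "0 \<le> (\<integral>\<omega>. \<sigma> * Z0 * std_normal_density 0 * sqrt (S T \<omega>) \<partial>M) - (\<integral>\<omega>. bs_put Z0 Z0 \<sigma> (S T \<omega>) \<partial>M) \<and>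
     (\<integral>\<omega>. \<sigma> * Z0 * std_normal_density 0 * sqrt (S T \<omega>) \<partial>M) - (\<integral>\<omega>. bs_put Z0 Z0 \<sigma> (S T \<omega>) \<partial>M)
       \<le> (\<integral>\<omega>. S T \<omega> powr (3/2) \<partial>M) * Z0 / (12 * sqrt (2 * pi)) * \<sigma> ^ 3"
    by (rule combined[OF assms(4,5) bs_put_meas bs_eq(2)[OF assms(4,5)] bs_neg(2)[OF assms(4,5)]])
  show ?thesis unfolding bc bp using c1 c2 assms(6) by simp
qed


end
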